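(* Fix $d\ge1$, $p\in[0,1]$ and $k\in\{0,\dots,2d\}$ with $k\ge 1+2dp$. Then for any two disjoint nonempty sets $A,B\subseteq\mathcal N_o$, $$\mathbf P_p[N(o)\cap A\neq\emptyset\text{ and }N(o)\cap B\neq\emptyset]\le \mathbf Q_{k/(2d)}[N(o)\cap A\neq\emptyset\text{ and }N(o)\cap B\neq\emptyset].$$
   Context: $\mathcal N_o=\{v\in\mathbb Z^d:\|v\|_1=1\}$; $N(o)$ is a random subset of $\mathcal N_o$. Under $\mathbf P_p$ each element of $\mathcal N_o$ is included independently with probability $p$. Under $\mathbf Q_{k/(2d)}$, $N(o)$ is a uniformly random $k$-element subset of $\mathcal N_o$. *)

theory Defs
  imports "HOL-Probability.Probability"
begin

text \<open>Points of Z^d are represented as integer lists of length d.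
  The neighbourhood of the origin: vectors of l1-norm 1.\<close>
definition nbhd :: "nat \<Rightarrow> int list set" where
  "nbhd d = {v. length v = d \<and> sum_list (map abs v) = 1}"

definition Pp :: "nat \<Rightarrow> real \<Rightarrow> int list set pmf" where
  "Pp d p = map_pmf (\<lambda>f. {v \<in> nbhd d. f v}) (Pi_pmf (nbhd d) False (\<lambda>_. bernoulli_pmf p))"

text \<open>Q_{k/(2d)}: uniformly random k-element subset of nbhd d (indexed by k).\<close>
definition Qk :: "nat \<Rightarrow> nat \<Rightarrow> int list set pmf" where
  "Qk d k = pmf_of_set {S. S \<subseteq> nbhd d \<and> card S = k}"

end

theory Submission
  imports Defs
begin


lemma binom_pred: "j \<ge> 1 \<Longrightarrow> real ((j-1) choose k) * real j = real (j-k) * real (j choose k)"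
proof -
  assume "j \<ge> 1"
  have "(j - k) * (j choose k) = j * ((j - 1) choose k)" by (rule binomial_absorb_comp)
  hence "real ((j - k) * (j choose k)) = real (j * ((j - 1) choose k))" by simp
  thus ?thesis by (simp only: of_nat_mult) (simp add: mult.commute)
qed

lemma miss_bound:
  fixes m k s :: nat
  assumes "m > 0" "s \<le> m" "k \<le> m"
  shows "real ((m - s) choose k) \<le> real (m choose k) * ((real m - real k) / real m) ^ s"
  using assms(2)
proof (induction s)
  case 0 then show ?case by simp
next
  case (Suc s)
  define j where "j = m - s"
  have j1: "j \<ge> 1" using Suc.prems j_def by simp
  have jm: "j \<le> m" using j_def by simp
  have IH: "real (j choose k) \<le> real (m choose k) * ((real m - real k) / real m) ^ s"
    using Suc j_def by simp
  have eq: "real ((j-1) choose k) = real (j-k) / real j * real (j choose k)"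
    using binom_pred[OF j1, of k] j1 by (simp add: field_simps)
  have r: "real (j-k) / real j \<le> (real m - real k) / real m"
  proof (cases "k \<le> j")
    case True
    have "real (j-k) * real m \<le> (real m - real k) * real j"
    proof -
      have "real j * real k \<le> real k * real m" using jm by (metis mult.commute mult_right_mono of_nat_0_le_iff of_nat_mono)
      thus ?thesis using True by (simp add: of_nat_diff algebra_simps)
    qed
    thus ?thesis using j1 assms(1) by (simp add: divide_simps)
  next
    case False
    hence "real (j - k) = 0" by simp
    moreover have "real k \<le> real m" using assms(3) by simp
    ultimately show ?thesis using \<open>m>0\<close> by (auto simp: divide_simps)
  qed
  have "m - Suc s = j - 1" using j_def by simp
  hence "real ((m - Suc s) choose k) = real (j-k) / real j * real (j choose k)" using eq by simp
  also have "\<dots> \<le> ((real m - real k) / real m) * real (j choose k)"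
    by (rule mult_right_mono[OF r]) simp
  also have "\<dots> \<le> ((real m - real k) / real m) * (real (m choose k) * ((real m - real k) / real m) ^ s)"
    using IH assms(1,3) by (intro mult_left_mono) (auto simp: divide_simps)
  finally show ?case by (simp add: algebra_simps)
qed

lemma main_ineq:
  fixes n k a b :: nat and q :: real
  assumes "a + b \<le> n" "1 \<le> k" "k \<le> n" "q \<le> 1" "real n * q \<ge> real n - real k + 1"
  shows "(1-q^a)*(1-q^b) * real (n choose k) \<le> real (n choose k) - real ((n-a) choose k)
           - real ((n-b) choose k) + real ((n-a-b) choose k)"
  using assms
proof (induction a arbitrary: n)
  case 0 then show ?case by simp
next
  case (Suc a)
  have q0: "q \<ge> 0"
  proof -
    have "real n * q \<ge> 1" using Suc.prems by simp
    thus ?thesis using Suc.prems by (smt (verit) mult_nonneg_nonpos of_nat_0_le_iff)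
  qed
  have qa: "0 \<le> 1 - q^b" using q0 Suc.prems(4) by (simp add: power_le_one)
  have qa': "0 \<le> 1 - q^Suc a" using q0 Suc.prems(4) power_le_one[of q "Suc a"] by linarith
  show ?case
  proof (cases "k = n")
    case True
    show ?thesis
    proof (cases "b = 0")
      case True then show ?thesis by simp
    next
      case False
      have "(1-q^Suc a)*(1-q^b) \<le> 1" using qa qa' q0 by (smt (verit) mult_left_le zero_le_power)
      moreover have "n - Suc a < n" "n - b < n" "n - Suc a - b < n" using False Suc.prems by auto
      moreover have z: "(n - Suc a) choose n = 0" "(n - b) choose n = 0" "(n - Suc a - b) choose n = 0"
        using False Suc.prems by (auto intro!: binomial_eq_0)
      ultimately show ?thesis unfolding \<open>k = n\<close> 
        by (simp only: z binomial_n_n of_nat_1 of_nat_0)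
    qed
  next
    case False
    hence kn: "k < n" using Suc.prems by simp
    define m where "m = n - 1"
    have nm: "n = Suc m" using m_def kn by simp
    have m0: "m > 0" using kn Suc.prems(2) nm by simp
    have IH: "(1-q^a)*(1-q^b) * real (m choose k) \<le> real (m choose k) - real ((m-a) choose k)
           - real ((m-b) choose k) + real ((m-a-b) choose k)"
    proof (rule Suc.IH)
      show "a + b \<le> m" "1 \<le> k" "k \<le> m" "q \<le> 1" using Suc.prems nm kn by auto
      show "real m - real k + 1 \<le> real m * q" using Suc.prems(5) Suc.prems(4) nm by (simp add: algebra_simps)
    qed
    have MB: "real ((m - b) choose (k-1)) \<le> real (m choose (k-1)) * q ^ b"
    proof -
      have "real ((m - b) choose (k-1)) \<le> real (m choose (k-1)) * ((real m - real (k-1)) / real m) ^ b"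
        by (rule miss_bound) (use m0 Suc.prems nm in auto)
      also have "\<dots> \<le> real (m choose (k-1)) * q ^ b"
      proof (intro mult_left_mono power_mono)
        show "(real m - real (k - 1)) / real m \<le> q"
          using Suc.prems(5) Suc.prems(2) Suc.prems(4) nm m0 by (simp add: divide_simps of_nat_diff algebra_simps)
        show "0 \<le> (real m - real (k - 1)) / real m" using Suc.prems nm m0 by simp
      qed simp
      finally show ?thesis .
    qed
    have P1: "real (n choose k) = real (m choose (k-1)) + real (m choose k)"
      using nm Suc.prems(2) by (metis Suc_diff_le binomial_Suc_Suc diff_Suc_1 of_nat_add)
    have P2: "real ((n-b) choose k) = real ((m-b) choose (k-1)) + real ((m-b) choose k)"
    proof -
      have "n - b = Suc (m - b)" using nm Suc.prems(1) by simp
      thus ?thesis using Suc.prems(2) by (metis Suc_diff_le binomial_Suc_Suc diff_Suc_1 of_nat_add)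
    qed
    have E1: "n - Suc a = m - a" "n - Suc a - b = m - a - b" using nm by auto
    have KEY: "real k * real (m choose k) = real (m - (k-1)) * real (m choose (k-1))"
    proof -
      have "Suc (k-1) * (m choose Suc (k-1)) = m * ((m - 1) choose (k-1))" by (rule binomial_absorption)
      moreover have "(m - (k-1)) * (m choose (k-1)) = m * ((m - 1) choose (k-1))" by (rule binomial_absorb_comp)
      ultimately have "k * (m choose k) = (m - (k-1)) * (m choose (k-1))" using Suc.prems(2) by simp
      hence "real (k * (m choose k)) = real ((m - (k-1)) * (m choose (k-1)))" by simp
      thus ?thesis by (simp only: of_nat_mult)
    qed
    have SUB: "q * real (m choose (k-1)) \<ge> (1 - q) * real (m choose k)"
    proof -
      have "real k * (q * real (m choose (k-1))) \<ge> real k * ((1 - q) * real (m choose k))"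
      proof -
        have "real k * ((1 - q) * real (m choose k)) = (1-q) * real (m - (k-1)) * real (m choose (k-1))"
          using KEY by (simp add: algebra_simps)
        also have "\<dots> \<le> real k * q * real (m choose (k-1))"
        proof (rule mult_right_mono)
          have "real (m - (k-1)) = real n - real k" using nm kn Suc.prems(2) by (simp add: of_nat_diff)
          hence "(1-q) * real (m - (k-1)) = (1-q) * (real n - real k)" by (simp only:)
          hence "(1-q) * real (m - (k-1)) = real n - real k - q * real n + q * real k" by (simp add: algebra_simps)
          thus "(1-q) * real (m - (k-1)) \<le> real k * q" using Suc.prems(5) by (simp add: algebra_simps)
        qed simp
        finally show ?thesis by (simp add: algebra_simps)
      qed
      thus ?thesis using Suc.prems(2) by simp
    qed
    define X where "X = real (m choose (k-1))"
    define Y where "Y = real (m choose k)"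
    have "(1-q^Suc a)*(1-q^b) * real (n choose k) = (1-q^b) * ((1 - q^Suc a) * (X + Y))"
      using P1 X_def Y_def by simp
    also have "\<dots> \<le> (1-q^b) * (X + (1 - q^a) * Y)"
    proof (rule mult_left_mono[OF _ qa])
      have "q^a * (q * X - (1-q) * Y) \<ge> 0" using SUB X_def Y_def q0 by simp
      thus "(1 - q^Suc a) * (X + Y) \<le> X + (1 - q^a) * Y" by (simp add: algebra_simps)
    qed
    also have "\<dots> = (1-q^b) * X + (1-q^a)*(1-q^b) * Y" by (simp add: algebra_simps)
    also have "\<dots> \<le> (X - real ((m - b) choose (k-1))) + (real (m choose k) - real ((m-a) choose k)
           - real ((m-b) choose k) + real ((m-a-b) choose k))"
      using MB IH X_def Y_def by (simp add: algebra_simps)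
    also have "\<dots> = real (n choose k) - real ((n - Suc a) choose k)
           - real ((n-b) choose k) + real ((n - Suc a - b) choose k)"
      using P1 P2 E1 X_def by simp
    finally show ?thesis .
  qed
qed



lemma sum_abs_nn: "sum_list (map abs (w::int list)) \<ge> 0"
  by (induction w) auto

lemma sum_abs_zero: "sum_list (map abs (w::int list)) = 0 \<Longrightarrow> w = replicate (length w) 0"
  proof (induction w)
  case (Cons a w)
  have "sum_list (map abs w) \<ge> 0" by (rule sum_abs_nn)
  hence "a = 0" "sum_list (map abs w) = 0" using Cons.prems by simp_all
  then show ?case using Cons.IH by simp
qed simp

lemma nbhd_Suc: "nbhd (Suc d) = (Cons 0) ` nbhd d \<union> {1 # replicate d 0, -1 # replicate d 0}"
proof (intro set_eqI iffI)
  fix v assume "v \<in> nbhd (Suc d)"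
  then obtain x w where v: "v = x # w" "length w = d" "\<bar>x\<bar> + sum_list (map abs w) = 1"
    unfolding nbhd_def by (cases v) auto
  have nn: "sum_list (map abs w) \<ge> 0" by (rule sum_abs_nn)
  show "v \<in> (Cons 0) ` nbhd d \<union> {1 # replicate d 0, -1 # replicate d 0}"
  proof (cases "x = 0")
    case True then show ?thesis using v by (auto simp: nbhd_def)
  next
    case False
    hence "\<bar>x\<bar> \<ge> 1" by simp
    hence "sum_list (map abs w) = 0" "\<bar>x\<bar> = 1" using v nn by linarith+
    hence "w = replicate d 0" "x = 1 \<or> x = -1" using sum_abs_zero v(2) by auto
    thus ?thesis using v by auto
  qed
next
  fix v assume "v \<in> (Cons 0) ` nbhd d \<union> {1 # replicate d 0, -1 # replicate d 0}"
  thus "v \<in> nbhd (Suc d)" by (auto simp: nbhd_def sum_list_replicate)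
qed

lemma nbhd_card: "finite (nbhd d) \<and> card (nbhd d) = 2 * d"
proof (induction d)
  case 0
  have "nbhd 0 = {}" by (auto simp: nbhd_def)
  then show ?case by simp
next
  case (Suc d)
  have fin: "finite ((Cons 0) ` nbhd d)" using Suc by simp
  have c: "card ((Cons 0) ` nbhd d) = 2 * d" using Suc by (simp add: card_image)
  have disj: "(Cons 0) ` nbhd d \<inter> {1 # replicate d 0, -1 # replicate d 0} = {}" by auto
  have "card (nbhd (Suc d)) = 2 * d + 2"
    unfolding nbhd_Suc using card_Un_disjoint[OF fin _ disj] c by simp
  then show ?case unfolding nbhd_Suc using fin by simp
qed



lemma miss_prob:
  assumes "finite U" "S \<subseteq> U" "0 \<le> p" "p \<le> 1"
  shows "measure_pmf.prob (Pi_pmf U False (\<lambda>_. bernoulli_pmf p)) {f. \<forall>v\<in>S. \<not> f v} = (1-p) ^ card S"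
proof -
  have eq: "{f. \<forall>v\<in>S. \<not> f v} = Pi U (\<lambda>x. if x \<in> S then {False} else UNIV)"
    using assms(2) by (auto simp: Pi_def)
  have "measure_pmf.prob (Pi_pmf U False (\<lambda>_. bernoulli_pmf p)) {f. \<forall>v\<in>S. \<not> f v}
      = (\<Prod>x\<in>U. measure_pmf.prob (bernoulli_pmf p) (if x \<in> S then {False} else UNIV))"
    unfolding eq by (rule measure_Pi_pmf_Pi[OF assms(1)])
  also have "\<dots> = (\<Prod>x\<in>U. if x \<in> S then 1 - p else 1)"
    using assms(3,4) by (intro prod.cong) (auto simp: measure_pmf_single)
  also have "\<dots> = (1-p) ^ card S"
    using assms(1,2) by (simp add: prod.If_cases Int_absorb1)
  finally show ?thesis .
qed

lemma Pp_prob: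
  assumes "0 \<le> p" "p \<le> 1" "A \<subseteq> nbhd d" "B \<subseteq> nbhd d" "A \<inter> B = {}" "finite (nbhd d)"
  shows "measure_pmf.prob (Pp d p) {N. N \<inter> A \<noteq> {} \<and> N \<inter> B \<noteq> {}}
      = 1 - (1-p)^card A - (1-p)^card B + (1-p)^(card A + card B)"
proof -
  define P where "P = Pi_pmf (nbhd d) False (\<lambda>_. bernoulli_pmf p)"
  define MA where "MA = {f. \<forall>v\<in>A. \<not> f v}"
  define MB where "MB = {f. \<forall>v\<in>B. \<not> f v}"
  have pre: "(\<lambda>f. {v \<in> nbhd d. f v}) -` {N. N \<inter> A \<noteq> {} \<and> N \<inter> B \<noteq> {}} = UNIV - (MA \<union> MB)"
    using assms(3,4) unfolding MA_def MB_def by auto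
  have int: "MA \<inter> MB = {f. \<forall>v\<in>A \<union> B. \<not> f v}" unfolding MA_def MB_def by auto
  have fA: "finite A" "finite B" using assms finite_subset by metis+
  have cAB: "card (A \<union> B) = card A + card B" using card_Un_disjoint[OF fA assms(5)] .
  have "measure_pmf.prob (Pp d p) {N. N \<inter> A \<noteq> {} \<and> N \<inter> B \<noteq> {}} = measure_pmf.prob P (UNIV - (MA \<union> MB))"
    unfolding Pp_def P_def measure_map_pmf pre ..
  also have "\<dots> = 1 - measure_pmf.prob P (MA \<union> MB)"
    using measure_pmf.prob_compl[of "MA \<union> MB" P] by simp
  also have "measure_pmf.prob P (MA \<union> MB) = measure_pmf.prob P MA + measure_pmf.prob P MB - measure_pmf.prob P (MA \<inter> MB)"
    using measure_pmf.finite_measure_Union'[of MA P MB] measure_pmf.finite_measure_Diff'[of MB P MA]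
    by (simp add: Int_commute)
  also have "measure_pmf.prob P MA = (1-p)^card A" unfolding P_def MA_def
    by (rule miss_prob) (use assms in auto)
  also have "measure_pmf.prob P MB = (1-p)^card B" unfolding P_def MB_def
    by (rule miss_prob) (use assms in auto)
  also have "measure_pmf.prob P (MA \<inter> MB) = (1-p)^(card A + card B)" unfolding P_def int cAB[symmetric]
    by (rule miss_prob) (use assms in auto)
  finally show ?thesis by simp
qed

lemma Qk_prob:
  assumes "A \<subseteq> nbhd d" "B \<subseteq> nbhd d" "A \<inter> B = {}" "finite (nbhd d)" "k \<le> card (nbhd d)"
  shows "measure_pmf.prob (Qk d k) {N. N \<inter> A \<noteq> {} \<and> N \<inter> B \<noteq> {}}
      = (real (card (nbhd d) choose k) - real ((card (nbhd d) - card A) choose k)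
         - real ((card (nbhd d) - card B) choose k) + real ((card (nbhd d) - card A - card B) choose k))
        / real (card (nbhd d) choose k)"
proof -
  define U where "U = nbhd d"
  define X where "X = {S. S \<subseteq> U \<and> card S = k}"
  define XA where "XA = {S. S \<subseteq> U - A \<and> card S = k}"
  define XB where "XB = {S. S \<subseteq> U - B \<and> card S = k}"
  have fU: "finite U" using assms U_def by simp
  have fA: "finite A" "finite B" using assms finite_subset by metis+
  have cX: "card X = card U choose k" unfolding X_def by (rule n_subsets[OF fU])
  have cXA: "card XA = (card U - card A) choose k" unfolding XA_def
    using n_subsets[of "U - A" k] fU assms(1) U_def by (simp add: card_Diff_subset fA)
  have cXB: "card XB = (card U - card B) choose k" unfolding XB_def
    using n_subsets[of "U - B" k] fU assms(2) U_def by (simp add: card_Diff_subset fA)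
  have XAB: "XA \<inter> XB = {S. S \<subseteq> U - (A \<union> B) \<and> card S = k}" unfolding XA_def XB_def by auto
  have cAB: "card (A \<union> B) = card A + card B" using card_Un_disjoint[OF fA assms(3)] .
  have cXAB: "card (XA \<inter> XB) = (card U - card A - card B) choose k" unfolding XAB
    using n_subsets[of "U - (A \<union> B)" k] fU assms(1,2) U_def cAB
    by (simp add: card_Diff_subset fA)
  have fX: "finite X" unfolding X_def by (rule finite_subset[of _ "Pow U"]) (use fU in auto)
  have XAX: "XA \<subseteq> X" "XB \<subseteq> X" unfolding XA_def XB_def X_def by auto
  have fXA: "finite XA" "finite XB" using XAX fX finite_subset by auto
  have ne: "X \<noteq> {}"
  proof -
    obtain S where "S \<subseteq> U" "card S = k" using obtain_subset_with_card_n assms(5) U_def by metis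
    thus ?thesis unfolding X_def by auto
  qed
  have evt: "X \<inter> {N. N \<inter> A \<noteq> {} \<and> N \<inter> B \<noteq> {}} = X - (XA \<union> XB)"
    unfolding X_def XA_def XB_def by auto
  have "card (X - (XA \<union> XB)) = card X - card (XA \<union> XB)"
    using XAX fX by (intro card_Diff_subset) (auto intro: finite_subset)
  moreover have "card (XA \<union> XB) + card (XA \<inter> XB) = card XA + card XB"
    using card_Un_Int[OF fXA] by simp
  moreover have "card (XA \<union> XB) \<le> card X" using XAX fX by (intro card_mono) auto
  ultimately have "real (card (X - (XA \<union> XB))) = real (card X) - real (card XA) - real (card XB) + real (card (XA \<inter> XB))"
    by (simp add: of_nat_diff)
  hence main: "real (card (X \<inter> {N. N \<inter> A \<noteq> {} \<and> N \<inter> B \<noteq> {}})) = real (card X) - real (card XA) - real (card XB) + real (card (XA \<inter> XB))"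
    using evt by simp
  show ?thesis
    unfolding Qk_def
    using measure_pmf_of_set[OF ne[unfolded X_def] fX[unfolded X_def], of "{N. N \<inter> A \<noteq> {} \<and> N \<inter> B \<noteq> {}}"]
      main cX cXA cXB cXAB unfolding X_def U_def by simp
qed


theorem lemma3p9:
  fixes d k :: nat and p :: real and A B :: "int list set"
  assumes "d \<ge> 1" and "0 \<le> p" and "p \<le> 1" and "k \<le> 2 * d"
    and "real k \<ge> 1 + 2 * real d * p"
    and "A \<subseteq> nbhd d" and "B \<subseteq> nbhd d" and "A \<inter> B = {}"
    and "A \<noteq> {}" and "B \<noteq> {}"
  shows "measure_pmf.prob (Pp d p) {N. N \<inter> A \<noteq> {} \<and> N \<inter> B \<noteq> {}}
       \<le> measure_pmf.prob (Qk d k) {N. N \<inter> A \<noteq> {} \<and> N \<inter> B \<noteq> {}}"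
proof -
  define n where "n = card (nbhd d)"
  define q where "q = 1 - p"
  have fU: "finite (nbhd d)" and cn: "n = 2 * d" using nbhd_card n_def by auto
  have fA: "finite A" "finite B" using assms(6,7) fU finite_subset by metis+
  have ab: "card A + card B \<le> n"
  proof -
    have "card (A \<union> B) \<le> n" unfolding n_def using assms(6,7) fU by (intro card_mono) auto
    thus ?thesis using card_Un_disjoint[OF fA assms(8)] by simp
  qed
  have kn: "k \<le> n" using cn assms(4) by simp
  have k1: "1 \<le> k"
  proof -
    have "2 * real d * p \<ge> 0" using assms(2) by simp
    hence "real k \<ge> 1" using assms(5) by linarith
    thus ?thesis by simp
  qed
  have q1: "q \<le> 1" using assms(2) q_def by simp
  have nq: "real n * q \<ge> real n - real k + 1"
  proof -
    have "real n * q = real n - real n * p" unfolding q_def by (simp add: algebra_simps)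
    moreover have "real n * p = 2 * real d * p" using cn by simp
    ultimately show ?thesis using assms(5) by linarith
  qed
  have MI: "(1-q^card A)*(1-q^card B) * real (n choose k) \<le> real (n choose k) - real ((n-card A) choose k)
           - real ((n-card B) choose k) + real ((n-card A-card B) choose k)"
    by (rule main_ineq[OF ab k1 kn q1 nq])
  have pos: "real (n choose k) > 0" using kn by simp
  have "measure_pmf.prob (Pp d p) {N. N \<inter> A \<noteq> {} \<and> N \<inter> B \<noteq> {}} = (1-q^card A)*(1-q^card B)"
    using Pp_prob[OF assms(2,3,6,7,8) fU] unfolding q_def[symmetric] by (simp add: algebra_simps power_add)
  also have "\<dots> \<le> (real (n choose k) - real ((n-card A) choose k)
           - real ((n-card B) choose k) + real ((n-card A-card B) choose k)) / real (n choose k)"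
    using MI pos by (simp add: pos_le_divide_eq)
  also have "\<dots> = measure_pmf.prob (Qk d k) {N. N \<inter> A \<noteq> {} \<and> N \<inter> B \<noteq> {}}"
    using Qk_prob[OF assms(6,7,8) fU] kn n_def by simp
  finally show ?thesis .
qed

end
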